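(* Let $V$ be an Archimedean linear lattice and let $(\mathcal{R}, S, V)$ be a $V$-complete vector $S$-metric space. Let $p, q, k:\mathcal{R}\to\mathcal{R}$ be maps satisfying: (i) for all $\xi,\gamma\in\mathcal{R}$, $$S(p\xi,p\xi,q\gamma)\preceq h_1 S(k\xi,k\xi,k\gamma)+h_2 S(p\xi,p\xi,k\xi)+h_3 S(q\gamma,q\gamma,k\gamma)+h_4 S(p\xi,p\xi,k\gamma)+h_5 S(q\gamma,q\gamma,k\xi),$$ where $h_1,\dots,h_5$ are positive real constants with $2h_1+2h_2+2h_3+4h_4+4h_5<1$; (ii) $p(\mathcal{R})\cup q(\mathcal{R})\subset k(\mathcal{R})$; (iii) one of $p(\mathcal{R})$, $q(\mathcal{R})$ or $k(\mathcal{R})$ is a $V$-complete subspace of $\mathcal{R}$. Then the pairs $\{p,k\}$ and $\{q,k\}$ have a unique point of coincidence in $\mathcal{R}$. If moreover $\{p,k\}$ and $\{q,k\}$ are weakly compatible, then $p$, $q$ and $k$ have a unique common fixed point in $\mathcal{R}$.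
   Context: An ordered linear space is a real vector space $V$ with a partial order $\preceq$ such that $x\preceq y$ implies $x+z\preceq y+z$ and $\omega x\preceq \omega y$ for all $z\in V$, $\omega>0$. A linear lattice (Riesz space) is an ordered linear space in which every two-element set has a supremum and an infimum. Write $V^+=\{x\in V: x\succeq 0\}$; for a sequence $\langle\mu_n\rangle$ in $V$, $\mu_n\downarrow 0$ means $\mu_n$ is decreasing with infimum $0$. $V$ is Archimedean if $\frac1n x\downarrow 0$ for every $x\in V^+$. A vector $S$-metric on a nonempty set $\mathcal{R}$ is a map $S:\mathcal{R}\times\mathcal{R}\times\mathcal{R}\to V$ such that for all $x,y,z,a\in\mathcal{R}$: (a) $S(x,y,z)\succeq 0$; (b) $S(x,y,z)=0$ iff $x=y=z$; (c) $S(x,y,z)\preceq S(x,x,a)+S(y,y,a)+S(z,z,a)$. Then $(\mathcal{R},S,V)$ is a vector $S$-metric space. A sequence $\langle x_n\rangle$ in $\mathcal{R}$ $V$-converges to $x\in\mathcal{R}$ if there is a sequence $\mu_n\downarrow 0$ in $V$ with $S(x_n,x_n,x)\preceq \mu_n$ for all $n$; it is $V$-Cauchy if there is $\mu_n\downarrow0$ in $V$ with $S(x_n,x_n,x_{n+q})\preceq\mu_n$ for all $n,q$. The space (or a subset) is $V$-complete if every $V$-Cauchy sequence in it $V$-converges to a limit in it. For maps $f,g:\mathcal{R}\to\mathcal{R}$, a point $x$ with $fx=gx=y$ is a coincidence point and $y$ is a point of coincidence of $f$ and $g$; $f,g$ are weakly compatible if $fgx=gfx$ whenever $fx=gx$.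 A common fixed point of several maps is a point fixed by all of them. *)

theory Defs
  imports "HOL-Analysis.Analysis"
begin

text \<open>V is modelled as a type of class ordered_real_vector (ordered linear space) together
  with class lattice (every two-element set has sup and inf): a linear lattice.\<close>

definition decr_to_zero :: "(nat \<Rightarrow> 'v::ordered_real_vector) \<Rightarrow> bool" where
  "decr_to_zero \<mu> \<longleftrightarrow> (\<forall>n. \<mu> (Suc n) \<le> \<mu> n) \<and> (\<forall>n. 0 \<le> \<mu> n)
      \<and> (\<forall>b. (\<forall>n. b \<le> \<mu> n) \<longrightarrow> b \<le> 0)"

definition archimedean_V :: "'v::ordered_real_vector itself \<Rightarrow> bool" where
  "archimedean_V TYPE('v) \<longleftrightarrow>
     (\<forall>x::'v. 0 \<le> x \<longrightarrow> decr_to_zero (\<lambda>n. (1 / real (Suc n)) *\<^sub>R x))"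

definition vector_S_metric :: "('a \<Rightarrow> 'a \<Rightarrow> 'a \<Rightarrow> 'v::ordered_real_vector) \<Rightarrow> bool" where
  "vector_S_metric S \<longleftrightarrow>
     (\<forall>x y z. 0 \<le> S x y z) \<and>
     (\<forall>x y z. S x y z = 0 \<longleftrightarrow> x = y \<and> y = z) \<and>
     (\<forall>x y z a. S x y z \<le> S x x a + S y y a + S z z a)"

definition V_converges :: "('a \<Rightarrow> 'a \<Rightarrow> 'a \<Rightarrow> 'v::ordered_real_vector) \<Rightarrow> (nat \<Rightarrow> 'a) \<Rightarrow> 'a \<Rightarrow> bool" where
  "V_converges S x l \<longleftrightarrow> (\<exists>\<mu>. decr_to_zero \<mu> \<and> (\<forall>n. S (x n) (x n) l \<le> \<mu> n))"

definition V_Cauchy :: "('a \<Rightarrow> 'a \<Rightarrow> 'a \<Rightarrow> 'v::ordered_real_vector) \<Rightarrow> (nat \<Rightarrow> 'a) \<Rightarrow> bool" where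
  "V_Cauchy S x \<longleftrightarrow> (\<exists>\<mu>. decr_to_zero \<mu> \<and> (\<forall>n q. S (x n) (x n) (x (n + q)) \<le> \<mu> n))"

definition V_complete :: "('a \<Rightarrow> 'a \<Rightarrow> 'a \<Rightarrow> 'v::ordered_real_vector) \<Rightarrow> 'a set \<Rightarrow> bool" where
  "V_complete S A \<longleftrightarrow>
     (\<forall>x. (\<forall>n. x n \<in> A) \<longrightarrow> V_Cauchy S x \<longrightarrow> (\<exists>l\<in>A. V_converges S x l))"

definition point_of_coincidence :: "('a \<Rightarrow> 'a) \<Rightarrow> ('a \<Rightarrow> 'a) \<Rightarrow> 'a \<Rightarrow> bool" where
  "point_of_coincidence f g y \<longleftrightarrow> (\<exists>x. f x = y \<and> g x = y)"

definition weakly_compatible :: "('a \<Rightarrow> 'a) \<Rightarrow> ('a \<Rightarrow> 'a) \<Rightarrow> bool" where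
  "weakly_compatible f g \<longleftrightarrow> (\<forall>x. f x = g x \<longrightarrow> f (g x) = g (f x))"

end

theory Submission
  imports Defs
begin

lemma Snonneg: "vector_S_metric S \<Longrightarrow> 0 \<le> S x y z"
  unfolding vector_S_metric_def by (elim conjE allE)

lemma Szero: "vector_S_metric S \<Longrightarrow> S x y z = 0 \<longleftrightarrow> x = y \<and> y = z"
proof -
  assume "vector_S_metric S"
  then have "\<forall>x y z. S x y z = 0 \<longleftrightarrow> x = y \<and> y = z"
    unfolding vector_S_metric_def by (elim conjE)
  then show ?thesis by (elim allE)
qed

lemma Stri0: "vector_S_metric S \<Longrightarrow> S x y z \<le> S x x a + S y y a + S z z a"
proof -
  assume "vector_S_metric S"
  then have "\<forall>x y z a. S x y z \<le> S x x a + S y y a + S z z a"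
    unfolding vector_S_metric_def by (elim conjE)
  then show ?thesis by (elim allE)
qed

lemma Ssym:
  assumes "vector_S_metric S" shows "S x x y = S y y x"
proof -
  have "S x x y \<le> S y y x" using Stri0[OF assms, of x x y x] Szero[OF assms, of x x x] by simp
  moreover have "S y y x \<le> S x x y" using Stri0[OF assms, of y y x y] Szero[OF assms, of y y y] by simp
  ultimately show ?thesis by (rule antisym)
qed

lemma Stri:
  assumes "vector_S_metric S" shows "S x x z \<le> S x x w + S x x w + S w w z"
  using Stri0[OF assms, of x x z w] Ssym[OF assms, of z w] by simp

lemma decr_antimono:
  assumes "decr_to_zero \<mu>" "n \<le> m" shows "\<mu> m \<le> \<mu> n"
  using assms(2)
proof (induction m rule: dec_induct)
  case base then show ?case by simp
next
  case (step m)
  then show ?case using assms(1) unfolding decr_to_zero_def by (meson order_trans)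
qed

lemma decr_inf: "decr_to_zero \<mu> \<Longrightarrow> (\<And>n. b \<le> \<mu> n) \<Longrightarrow> b \<le> 0"
  unfolding decr_to_zero_def by blast

lemma decr_add:
  fixes \<mu> \<nu> :: "nat \<Rightarrow> 'v::ordered_real_vector"
  assumes m: "decr_to_zero \<mu>" and n: "decr_to_zero \<nu>"
  shows "decr_to_zero (\<lambda>n. \<mu> n + \<nu> n)"
  unfolding decr_to_zero_def
proof (intro conjI allI impI)
  fix i show "\<mu> (Suc i) + \<nu> (Suc i) \<le> \<mu> i + \<nu> i"
    using m n unfolding decr_to_zero_def by (meson add_mono)
next
  fix i show "0 \<le> \<mu> i + \<nu> i"
    using m n unfolding decr_to_zero_def by (simp add: add_nonneg_nonneg)
next
  fix b assume H: "\<forall>i. b \<le> \<mu> i + \<nu> i"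
  have "b \<le> \<mu> j" for j
  proof -
    have "b - \<mu> j \<le> \<nu> i" for i
    proof -
      have "b \<le> \<mu> (max i j) + \<nu> (max i j)" using H by blast
      also have "\<dots> \<le> \<mu> j + \<nu> i"
        by (intro add_mono decr_antimono[OF m] decr_antimono[OF n]) auto
      finally show ?thesis by (simp add: algebra_simps)
    qed
    then have "b - \<mu> j \<le> 0" by (rule decr_inf[OF n])
    then show ?thesis by simp
  qed
  then show "b \<le> 0" by (rule decr_inf[OF m])
qed

lemma decr_scale:
  fixes \<mu> :: "nat \<Rightarrow> 'v::ordered_real_vector"
  assumes c: "0 \<le> c" and m: "decr_to_zero \<mu>"
  shows "decr_to_zero (\<lambda>n. c *\<^sub>R \<mu> n)"
  unfolding decr_to_zero_def
proof (intro conjI allI impI)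
  fix i show "c *\<^sub>R \<mu> (Suc i) \<le> c *\<^sub>R \<mu> i"
    using m c unfolding decr_to_zero_def by (simp add: scaleR_left_mono)
next
  fix i show "0 \<le> c *\<^sub>R \<mu> i"
    using m c unfolding decr_to_zero_def by (simp add: scaleR_nonneg_nonneg)
next
  fix b assume H: "\<forall>i. b \<le> c *\<^sub>R \<mu> i"
  show "b \<le> 0"
  proof (cases "c = 0")
    case True then show ?thesis using H by auto
  next
    case False
    then have cp: "c > 0" using c by simp
    have "(1/c) *\<^sub>R b \<le> \<mu> i" for i
      using scaleR_left_mono[OF H[rule_format, of i], of "1/c"] cp by simp
    then have "(1/c) *\<^sub>R b \<le> 0" by (rule decr_inf[OF m])
    then show ?thesis using cp by (simp add: scaleR_le_0_iff)
  qed
qed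

lemma decr_sub:
  fixes \<mu> :: "nat \<Rightarrow> 'v::ordered_real_vector"
  assumes g: "mono g" "\<And>m. m \<le> g m" and m: "decr_to_zero \<mu>"
  shows "decr_to_zero (\<lambda>n. \<mu> (g n))"
  unfolding decr_to_zero_def
proof (intro conjI allI impI)
  fix i show "\<mu> (g (Suc i)) \<le> \<mu> (g i)"
    by (rule decr_antimono[OF m]) (simp add: g(1) monoD)
next
  fix i show "0 \<le> \<mu> (g i)" using m unfolding decr_to_zero_def by blast
next
  fix b assume H: "\<forall>i. b \<le> \<mu> (g i)"
  have "b \<le> \<mu> i" for i using H decr_antimono[OF m g(2)[of i]] by (meson order_trans)
  then show "b \<le> 0" by (rule decr_inf[OF m])
qed

lemma decr_geom:
  fixes d :: "'v::ordered_real_vector"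
  assumes arch: "archimedean_V TYPE('v)"
    and c: "0 \<le> c" and r: "0 \<le> r" "r < 1" and d: "0 \<le> d"
  shows "decr_to_zero (\<lambda>n. (c * r^n) *\<^sub>R d)"
  unfolding decr_to_zero_def
proof (intro conjI allI impI)
  fix i show "(c * r^Suc i) *\<^sub>R d \<le> (c * r^i) *\<^sub>R d"
    using c r d by (intro scaleR_right_mono mult_left_mono) (auto intro: mult_left_le_one_le)
next
  fix i show "0 \<le> (c * r^i) *\<^sub>R d" using c r d by (simp add: scaleR_nonneg_nonneg)
next
  fix b assume H: "\<forall>i. b \<le> (c * r^i) *\<^sub>R d"
  have A: "decr_to_zero (\<lambda>n. (1 / real (Suc n)) *\<^sub>R d)"
    using arch d unfolding archimedean_V_def by blast
  have "b \<le> (1 / real (Suc m)) *\<^sub>R d" for m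
  proof -
    have "(\<lambda>n. c * r^n) \<longlonglongrightarrow> 0"
      using r by (intro tendsto_mult_right_zero LIMSEQ_power_zero) auto
    moreover have "(0::real) < 1 / real (Suc m)" by simp
    ultimately have "eventually (\<lambda>n. c * r^n < 1 / real (Suc m)) sequentially"
      by (rule order_tendstoD(2))
    then obtain n where n: "c * r^n < 1 / real (Suc m)"
      by (auto simp: eventually_sequentially)
    have "b \<le> (c * r^n) *\<^sub>R d" using H by blast
    also have "\<dots> \<le> (1 / real (Suc m)) *\<^sub>R d"
      using n d by (intro scaleR_right_mono) auto
    finally show ?thesis .
  qed
  then show "b \<le> 0" by (rule decr_inf[OF A])
qed

lemma absorb:
  fixes W :: "'v::ordered_real_vector"
  assumes W: "0 \<le> W" and a: "a < 1" and E: "decr_to_zero E"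
    and H: "\<And>n. W \<le> a *\<^sub>R W + E n"
  shows "W = 0"
proof -
  have "(1 - a) *\<^sub>R W \<le> E n" for n
    using H[of n] by (simp add: algebra_simps)
  then have "(1 - a) *\<^sub>R W \<le> 0" by (rule decr_inf[OF E])
  then have "W \<le> 0" using a by (simp add: scaleR_le_0_iff)
  then show ?thesis using W by simp
qed

lemma zero_decr: "decr_to_zero (\<lambda>n. 0)"
  unfolding decr_to_zero_def by auto

lemma absorb0:
  fixes W :: "'v::ordered_real_vector"
  assumes W: "0 \<le> W" and a: "a < 1" and H: "W \<le> a *\<^sub>R W"
  shows "W = 0"
  using absorb[OF W a zero_decr] H by simp

lemma step_lemma:
  fixes D D' :: "'v::ordered_real_vector"
  assumes D: "0 \<le> D" "0 \<le> D'" and a: "0 \<le> a" "a \<le> A" "A < 1"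
    and b: "0 \<le> b" "b \<le> B" and H: "D' \<le> b *\<^sub>R D + a *\<^sub>R D'"
  shows "D' \<le> (B / (1 - A)) *\<^sub>R D"
proof -
  have "D' \<le> B *\<^sub>R D + A *\<^sub>R D'"
    using H add_mono[OF scaleR_right_mono[OF b(2) D(1)] scaleR_right_mono[OF a(2) D(2)]]
    by (rule order_trans)
  then have "(1 - A) *\<^sub>R D' \<le> B *\<^sub>R D" by (simp add: algebra_simps)
  then have "(1/(1-A)) *\<^sub>R ((1 - A) *\<^sub>R D') \<le> (1/(1-A)) *\<^sub>R (B *\<^sub>R D)"
    using a by (intro scaleR_left_mono) auto
  then show ?thesis using a by simp
qed

lemma conv_sub:
  fixes S :: "'a \<Rightarrow> 'a \<Rightarrow> 'a \<Rightarrow> 'v::ordered_real_vector"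
  assumes Smet: "vector_S_metric S" and m: "decr_to_zero \<mu>"
    and C: "\<And>n q. S (y n) (y n) (y (n + q)) \<le> \<mu> n"
    and g: "mono g" "\<And>m. m \<le> g m" and A: "V_complete S A" and yA: "\<And>m. y (g m) \<in> A"
  shows "\<exists>u\<in>A. \<exists>\<nu>. decr_to_zero \<nu> \<and> (\<forall>n. S (y n) (y n) u \<le> \<nu> n)"
proof -
  have Cy: "V_Cauchy S (\<lambda>m. y (g m))"
    unfolding V_Cauchy_def
  proof (intro exI conjI allI)
    show "decr_to_zero (\<lambda>m. \<mu> (g m))" by (rule decr_sub[OF g m])
    fix n q
    have le: "g n \<le> g (n + q)" using g(1) by (simp add: monoD)
    have "S (y (g n)) (y (g n)) (y (g n + (g (n + q) - g n))) \<le> \<mu> (g n)" by (rule C)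
    then show "S (y (g n)) (y (g n)) (y (g (n + q))) \<le> \<mu> (g n)" using le by simp
  qed
  have ym: "\<forall>m. y (g m) \<in> A" using yA by simp
  have "\<exists>l\<in>A. V_converges S (\<lambda>m. y (g m)) l"
    using A unfolding V_complete_def using ym Cy by simp
  then obtain u where u: "u \<in> A" and uc: "V_converges S (\<lambda>m. y (g m)) u" by (elim bexE)
  from uc obtain \<nu> where nu: "decr_to_zero \<nu>" "\<And>m. S (y (g m)) (y (g m)) u \<le> \<nu> m"
    unfolding V_converges_def by (elim exE conjE) simp
  have "S (y n) (y n) u \<le> (\<mu> n + \<mu> n) + \<nu> n" for n
  proof -
    have "S (y n) (y n) u \<le> S (y n) (y n) (y (g n)) + S (y n) (y n) (y (g n)) + S (y (g n)) (y (g n)) u"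
      by (rule Stri[OF Smet])
    also have "\<dots> \<le> \<mu> n + \<mu> n + \<nu> n"
    proof -
      have "S (y n) (y n) (y (g n)) \<le> \<mu> n" using C[of n "g n - n"] g(2)[of n] by simp
      then show ?thesis using nu(2)[of n] by (intro add_mono) auto
    qed
    finally show ?thesis .
  qed
  moreover have "decr_to_zero (\<lambda>n. (\<mu> n + \<mu> n) + \<nu> n)"
    by (intro decr_add m nu(1))
  ultimately show ?thesis using u by blast
qed


theorem theorem3p1:
  fixes S :: "'a \<Rightarrow> 'a \<Rightarrow> 'a \<Rightarrow> 'v::{ordered_real_vector, lattice}"
    and p q k :: "'a \<Rightarrow> 'a"
    and h1 h2 h3 h4 h5 :: real
  assumes arch: "archimedean_V TYPE('v)"
    and Smet: "vector_S_metric S"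
    and complete: "V_complete S UNIV"
    and hpos: "h1 > 0" "h2 > 0" "h3 > 0" "h4 > 0" "h5 > 0"
    and hsum: "2*h1 + 2*h2 + 2*h3 + 4*h4 + 4*h5 < 1"
    and contr: "\<And>\<xi> \<gamma>. S (p \<xi>) (p \<xi>) (q \<gamma>) \<le>
                 h1 *\<^sub>R S (k \<xi>) (k \<xi>) (k \<gamma>) + h2 *\<^sub>R S (p \<xi>) (p \<xi>) (k \<xi>)
               + h3 *\<^sub>R S (q \<gamma>) (q \<gamma>) (k \<gamma>) + h4 *\<^sub>R S (p \<xi>) (p \<xi>) (k \<gamma>)
               + h5 *\<^sub>R S (q \<gamma>) (q \<gamma>) (k \<xi>)"
    and range_sub: "range p \<union> range q \<subseteq> range k"
    and sub_complete: "V_complete S (range p) \<or> V_complete S (range q) \<or> V_complete S (range k)"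
  shows "(\<exists>y. point_of_coincidence p k y \<and> point_of_coincidence q k y \<and>
             (\<forall>z. point_of_coincidence p k z \<or> point_of_coincidence q k z \<longrightarrow> z = y))
         \<and> (weakly_compatible p k \<and> weakly_compatible q k \<longrightarrow>
             (\<exists>!x. p x = x \<and> q x = x \<and> k x = x))"
proof -
  note sym = Ssym[OF Smet] and tri = Stri[OF Smet] and nn = Snonneg[OF Smet]
    and sz = Szero[OF Smet]
  have self0: "S x x x = 0" for x using sz by simp
  define A where "A = h2 + h3 + (h4 + h4) + (h5 + h5)"
  define B where "B = h1 + h2 + h3 + h4 + h5"
  define lam where "lam = B / (1 - A)"
  have A1: "A < 1" and B1: "B < 1 - A" and Bp: "0 < B" and Ap: "0 \<le> A"
    using hsum hpos unfolding A_def B_def by auto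
  have lam0: "0 < lam" and lam1: "lam < 1" using A1 B1 Bp unfolding lam_def by auto
  have pk: "\<exists>s. k s = p t" for t
  proof -
    have "p t \<in> range k" using range_sub by (meson UnCI rangeI subsetD)
    then show ?thesis by (metis rangeE)
  qed
  have qk: "\<exists>s. k s = q t" for t
  proof -
    have "q t \<in> range k" using range_sub by (meson UnCI rangeI subsetD)
    then show ?thesis by (metis rangeE)
  qed
  define xs where "xs = rec_nat undefined (\<lambda>n xn. if even n then (SOME t. k t = p xn) else (SOME t. k t = q xn))"
  have xs_e: "k (xs (Suc n)) = p (xs n)" if "even n" for n
    using that someI_ex[OF pk[of "xs n"]] unfolding xs_def by simp
  have xs_o: "k (xs (Suc n)) = q (xs n)" if "odd n" for n
    using that someI_ex[OF qk[of "xs n"]] unfolding xs_def by simp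
  define y where "y n = k (xs n)" for n
  define D where "D n = S (y n) (y n) (y (Suc n))" for n
  have D0: "0 \<le> D n" for n unfolding D_def by (rule nn)
  have Dstep: "D (Suc n) \<le> lam *\<^sub>R D n" for n
  proof (cases "even n")
    case True
    have e1: "y (Suc n) = p (xs n)" using xs_e[OF True] unfolding y_def by simp
    have e2: "y (Suc (Suc n)) = q (xs (Suc n))" using xs_o[of "Suc n"] True unfolding y_def by simp
    have X: "S (y (Suc (Suc n))) (y (Suc (Suc n))) (y n) \<le> D (Suc n) + D (Suc n) + D n"
      using tri[of "y (Suc (Suc n))" "y n" "y (Suc n)"] unfolding D_def by (simp add: sym)
    have "D (Suc n) \<le> h1 *\<^sub>R D n + h2 *\<^sub>R D n + h3 *\<^sub>R D (Suc n) + h4 *\<^sub>R 0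
        + h5 *\<^sub>R S (y (Suc (Suc n))) (y (Suc (Suc n))) (y n)"
      using contr[of "xs n" "xs (Suc n)"] unfolding D_def e1[symmetric] e2[symmetric]
      unfolding y_def[symmetric] by (simp add: sym self0)
    also have "\<dots> \<le> h1 *\<^sub>R D n + h2 *\<^sub>R D n + h3 *\<^sub>R D (Suc n) + h4 *\<^sub>R 0
        + h5 *\<^sub>R (D (Suc n) + D (Suc n) + D n)"
      using X hpos by (intro add_left_mono scaleR_left_mono) auto
    also have "\<dots> = (h1 + h2 + h5) *\<^sub>R D n + (h3 + (h5 + h5)) *\<^sub>R D (Suc n)"
      by (simp only: scaleR_add_left scaleR_add_right scaleR_zero_right add_0_right add_0_left scaleR_2 scaleR_scaleR ac_simps)
    finally show ?thesis unfolding lam_def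
      using hpos A1 by (intro step_lemma D0) (auto simp: A_def B_def)
  next
    case False
    have e1: "y (Suc n) = q (xs n)" using xs_o False unfolding y_def by simp
    have e2: "y (Suc (Suc n)) = p (xs (Suc n))" using xs_e[of "Suc n"] False unfolding y_def by simp
    have X: "S (y (Suc (Suc n))) (y (Suc (Suc n))) (y n) \<le> D (Suc n) + D (Suc n) + D n"
      using tri[of "y (Suc (Suc n))" "y n" "y (Suc n)"] unfolding D_def by (simp add: sym)
    have "D (Suc n) = S (y (Suc (Suc n))) (y (Suc (Suc n))) (y (Suc n))"
      unfolding D_def by (simp add: sym)
    also have "\<dots> \<le> h1 *\<^sub>R D n + h2 *\<^sub>R D (Suc n) + h3 *\<^sub>R D n
        + h4 *\<^sub>R S (y (Suc (Suc n))) (y (Suc (Suc n))) (y n) + h5 *\<^sub>R 0"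
      using contr[of "xs (Suc n)" "xs n"] unfolding D_def e1[symmetric] e2[symmetric]
      unfolding y_def[symmetric] by (simp add: sym self0)
    also have "\<dots> \<le> h1 *\<^sub>R D n + h2 *\<^sub>R D (Suc n) + h3 *\<^sub>R D n
        + h4 *\<^sub>R (D (Suc n) + D (Suc n) + D n) + h5 *\<^sub>R 0"
      using X hpos by (intro add_right_mono add_left_mono scaleR_left_mono) auto
    also have "\<dots> = (h1 + h3 + h4) *\<^sub>R D n + (h2 + (h4 + h4)) *\<^sub>R D (Suc n)"
      by (simp only: scaleR_add_left scaleR_add_right scaleR_zero_right add_0_right add_0_left scaleR_2 scaleR_scaleR ac_simps)
    finally show ?thesis unfolding lam_def
      using hpos A1 by (intro step_lemma D0) (auto simp: A_def B_def)
  qed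
  have Dgeom: "D n \<le> lam^n *\<^sub>R D 0" for n
  proof (induction n)
    case 0 then show ?case by simp
  next
    case (Suc n)
    have "D (Suc n) \<le> lam *\<^sub>R D n" by (rule Dstep)
    also have "\<dots> \<le> lam *\<^sub>R (lam^n *\<^sub>R D 0)" using Suc lam0 by (intro scaleR_left_mono) auto
    finally show ?case by simp
  qed
  have T: "S (y n) (y n) (y (n + q)) \<le> 2 *\<^sub>R (\<Sum>i<q. D (n + i))" for n q
  proof (induction q arbitrary: n)
    case 0 then show ?case by (simp add: self0)
  next
    case (Suc q)
    have "S (y n) (y n) (y (n + Suc q)) \<le> D n + D n + S (y (Suc n)) (y (Suc n)) (y (Suc n + q))"
      using tri[of "y n" "y (n + Suc q)" "y (Suc n)"] unfolding D_def by simp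
    also have "\<dots> \<le> D n + D n + 2 *\<^sub>R (\<Sum>i<q. D (Suc n + i))"
      using Suc.IH[of "Suc n"] by (rule add_left_mono)
    also have "\<dots> = 2 *\<^sub>R (\<Sum>i<Suc q. D (n + i))"
    proof -
      have e: "(\<Sum>i<Suc q. D (n + i)) = D n + (\<Sum>i<q. D (Suc n + i))"
        by (subst sum.lessThan_Suc_shift) simp
      show ?thesis unfolding e scaleR_2 by (simp only: ac_simps)
    qed
    finally show ?case .
  qed
  define \<mu> where "\<mu> n = (2 / (1 - lam) * lam^n) *\<^sub>R D 0" for n
  have mu: "decr_to_zero \<mu>" unfolding \<mu>_def
    using lam0 lam1 D0 by (intro decr_geom[OF arch]) auto
  have C: "S (y n) (y n) (y (n + q)) \<le> \<mu> n" for n q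
  proof -
    have "(\<Sum>i<q. D (n + i)) \<le> (\<Sum>i<q. lam^(n+i) *\<^sub>R D 0)"
      by (intro sum_mono Dgeom)
    also have "\<dots> = (\<Sum>i<q. lam^(n+i)) *\<^sub>R D 0" by (simp add: scaleR_sum_left)
    also have "\<dots> \<le> (lam^n / (1 - lam)) *\<^sub>R D 0"
    proof (intro scaleR_right_mono D0)
      have "(\<Sum>i<q. lam^(n+i)) = lam^n * (\<Sum>i<q. lam^i)"
        by (simp add: power_add sum_distrib_left)
      also have "\<dots> = lam^n * ((1 - lam^q) / (1 - lam))"
        using lam1 by (simp add: sum_gp_strict)
      also have "\<dots> \<le> lam^n * (1 / (1 - lam))"
        using lam0 lam1 by (intro mult_left_mono divide_right_mono) auto
      finally show "(\<Sum>i<q. lam^(n+i)) \<le> lam^n / (1 - lam)" by simp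
    qed
    finally have "2 *\<^sub>R (\<Sum>i<q. D (n + i)) \<le> 2 *\<^sub>R ((lam^n / (1 - lam)) *\<^sub>R D 0)"
      by (intro scaleR_left_mono) auto
    then show ?thesis using T[of n q] unfolding \<mu>_def by (simp add: mult.commute)
  qed
  obtain u \<nu> where uk: "u \<in> range k" and nu: "decr_to_zero \<nu>" "\<And>n. S (y n) (y n) u \<le> \<nu> n"
  proof -
    have "\<exists>u\<in>range k. \<exists>\<nu>. decr_to_zero \<nu> \<and> (\<forall>n. S (y n) (y n) u \<le> \<nu> n)"
    proof -
      consider "V_complete S (range p)" | "V_complete S (range q)" | "V_complete S (range k)"
        using sub_complete by blast
      then show ?thesis
      proof cases
        case 1
        have "\<exists>u\<in>range p. \<exists>\<nu>. decr_to_zero \<nu> \<and> (\<forall>n. S (y n) (y n) u \<le> \<nu> n)"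
        proof (rule conv_sub[OF Smet mu C _ _ 1, of "\<lambda>m. 2*m+1"])
          show "mono (\<lambda>m::nat. 2*m+1)" by (auto simp: mono_def)
          show "m \<le> 2*m+1" for m :: nat by simp
          show "y (2*m+1) \<in> range p" for m using xs_e[of "2*m"] unfolding y_def by simp
        qed
        then show ?thesis using range_sub by blast
      next
        case 2
        have "\<exists>u\<in>range q. \<exists>\<nu>. decr_to_zero \<nu> \<and> (\<forall>n. S (y n) (y n) u \<le> \<nu> n)"
        proof (rule conv_sub[OF Smet mu C _ _ 2, of "\<lambda>m. 2*m+2"])
          show "mono (\<lambda>m::nat. 2*m+2)" by (auto simp: mono_def)
          show "m \<le> 2*m+2" for m :: nat by simp
          show "y (2*m+2) \<in> range q" for m using xs_o[of "2*m+1"] unfolding y_def by simp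
        qed
        then show ?thesis using range_sub by blast
      next
        case 3
        show ?thesis
        proof (rule conv_sub[OF Smet mu C _ _ 3, of "\<lambda>m. m"])
          show "mono (\<lambda>m::nat. m)" by (auto simp: mono_def)
        qed (auto simp: y_def)
      qed
    qed
    then show ?thesis using that by blast
  qed
  then obtain v where v: "k v = u" by blast
  have qv: "q v = u"
  proof -
    define W where "W = S u u (q v)"
    have W0: "0 \<le> W" unfolding W_def by (rule nn)
    have E: "decr_to_zero (\<lambda>n. (2 + h1 + h4 + h5) *\<^sub>R \<nu> n + (h2 * lam^n) *\<^sub>R D 0)"
      using hpos lam0 lam1 D0 by (intro decr_add decr_scale nu(1) decr_geom[OF arch]) auto
    have "W = 0"
    proof (rule absorb[OF W0 _ E])
      show "h3 + (h5 + h5) < 1" using hsum hpos by simp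
      fix n
      define m :: nat where "m = 2*n"
      have em: "even m" unfolding m_def by simp
      have nm: "\<nu> m \<le> \<nu> n" "\<nu> (Suc m) \<le> \<nu> n" using decr_antimono[OF nu(1)] unfolding m_def by auto
      have Dm: "D m \<le> lam^n *\<^sub>R D 0"
      proof -
        have "D m \<le> lam^m *\<^sub>R D 0" by (rule Dgeom)
        also have "\<dots> \<le> lam^n *\<^sub>R D 0" using lam0 lam1 D0
          by (intro scaleR_right_mono power_decreasing) (auto simp: m_def)
        finally show ?thesis .
      qed
      have e1: "y (Suc m) = p (xs m)" using xs_e[OF em] unfolding y_def by simp
      have a1: "S (y (Suc m)) (y (Suc m)) u \<le> \<nu> n" using nu(2)[of "Suc m"] nm by simp
      have a2: "S (y m) (y m) u \<le> \<nu> n" using nu(2)[of m] nm by simp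
      have X: "S (q v) (q v) (y m) \<le> W + W + \<nu> n"
        using tri[of "q v" "y m" u] a2 unfolding W_def by (simp add: sym add_left_mono order_trans)
      have "W \<le> S u u (y (Suc m)) + S u u (y (Suc m)) + S (y (Suc m)) (y (Suc m)) (q v)"
        unfolding W_def by (rule tri)
      also have "\<dots> \<le> \<nu> n + \<nu> n + (h1 *\<^sub>R S (y m) (y m) u + h2 *\<^sub>R D m + h3 *\<^sub>R W
          + h4 *\<^sub>R S (y (Suc m)) (y (Suc m)) u + h5 *\<^sub>R S (q v) (q v) (y m))"
      proof (intro add_mono)
        show "S u u (y (Suc m)) \<le> \<nu> n" using a1 by (simp add: sym)
        show "S u u (y (Suc m)) \<le> \<nu> n" using a1 by (simp add: sym)
        show "S (y (Suc m)) (y (Suc m)) (q v) \<le> h1 *\<^sub>R S (y m) (y m) u + h2 *\<^sub>R D m + h3 *\<^sub>R W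
          + h4 *\<^sub>R S (y (Suc m)) (y (Suc m)) u + h5 *\<^sub>R S (q v) (q v) (y m)"
          using contr[of "xs m" v] unfolding e1[symmetric] v W_def D_def y_def[symmetric]
          by (simp add: sym)
      qed
      also have "\<dots> \<le> \<nu> n + \<nu> n + (h1 *\<^sub>R \<nu> n + h2 *\<^sub>R (lam^n *\<^sub>R D 0) + h3 *\<^sub>R W
          + h4 *\<^sub>R \<nu> n + h5 *\<^sub>R (W + W + \<nu> n))"
        using hpos a1 a2 Dm X by (intro add_mono order_refl scaleR_left_mono) auto
      also have "\<dots> = (h3 + (h5 + h5)) *\<^sub>R W + ((2 + h1 + h4 + h5) *\<^sub>R \<nu> n + (h2 * lam^n) *\<^sub>R D 0)"
        by (simp only: scaleR_add_left scaleR_add_right scaleR_zero_right add_0_right add_0_left scaleR_2 scaleR_scaleR ac_simps)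
      finally show "W \<le> (h3 + (h5 + h5)) *\<^sub>R W + ((2 + h1 + h4 + h5) *\<^sub>R \<nu> n + (h2 * lam^n) *\<^sub>R D 0)" .
    qed
    then show ?thesis unfolding W_def using sz by simp
  qed
  have pv: "p v = u"
  proof -
    define W where "W = S (p v) (p v) u"
    have "W \<le> h2 *\<^sub>R W + h4 *\<^sub>R W"
      using contr[of v v] unfolding qv v W_def by (simp add: self0)
    then have "W \<le> (h2 + h4) *\<^sub>R W" by (simp add: scaleR_add_left)
    then have "W = 0" using hsum hpos by (intro absorb0[of W "h2+h4"]) (auto simp: W_def nn)
    then show ?thesis unfolding W_def using sz by simp
  qed
  have uniq: "z = u" if "point_of_coincidence p k z \<or> point_of_coincidence q k z" for z
    using that
  proof
    assume "point_of_coincidence p k z"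
    then obtain x where x: "p x = z" "k x = z" unfolding point_of_coincidence_def by blast
    define W where "W = S z z u"
    have "W \<le> h1 *\<^sub>R W + h4 *\<^sub>R W + h5 *\<^sub>R W"
      using contr[of x v] unfolding x qv v W_def by (simp add: self0 sym[of u z])
    then have "W \<le> (h1 + h4 + h5) *\<^sub>R W" by (simp add: scaleR_add_left)
    then have "W = 0" using hsum hpos by (intro absorb0[of W "h1+h4+h5"]) (auto simp: W_def nn)
    then show ?thesis unfolding W_def using sz by simp
  next
    assume "point_of_coincidence q k z"
    then obtain x where x: "q x = z" "k x = z" unfolding point_of_coincidence_def by blast
    define W where "W = S u u z"
    have "W \<le> h1 *\<^sub>R W + h4 *\<^sub>R W + h5 *\<^sub>R W"
      using contr[of v x] unfolding x pv v W_def by (simp add: self0 sym[of z u])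
    then have "W \<le> (h1 + h4 + h5) *\<^sub>R W" by (simp add: scaleR_add_left)
    then have "W = 0" using hsum hpos by (intro absorb0[of W "h1+h4+h5"]) (auto simp: W_def nn)
    then show ?thesis unfolding W_def using sz by simp
  qed
  have pocp: "point_of_coincidence p k u" and pocq: "point_of_coincidence q k u"
    unfolding point_of_coincidence_def using pv qv v by blast+
  show ?thesis
  proof (intro conjI impI exI)
    show "point_of_coincidence p k u" by (fact pocp)
    show "point_of_coincidence q k u" by (fact pocq)
    show "\<forall>z. point_of_coincidence p k z \<or> point_of_coincidence q k z \<longrightarrow> z = u"
      using uniq by blast
  next
    assume wc: "weakly_compatible p k \<and> weakly_compatible q k"
    have "p u = k u" using wc pv v unfolding weakly_compatible_def by metis
    then have pu: "p u = u" "k u = u" using uniq[of "p u"] unfolding point_of_coincidence_def by metis+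
    have "q u = k u" using wc qv v unfolding weakly_compatible_def by metis
    then have qu: "q u = u" using uniq[of "q u"] pu unfolding point_of_coincidence_def by metis
    show "\<exists>!x. p x = x \<and> q x = x \<and> k x = x"
    proof
      show "p u = u \<and> q u = u \<and> k u = u" using pu qu by simp
      fix x assume "p x = x \<and> q x = x \<and> k x = x"
      then show "x = u" using uniq[of x] unfolding point_of_coincidence_def by metis
    qed
  qed
qed

end
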